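(* Suppose a language model produces a raw (pre-watermark) probability vector $p\in(0,1)^N$. Let $\gamma\in(0,1)$ with $\gamma N$ an integer, and randomly (uniformly) partition the indices $\{1,\dots,N\}$ into a green list $G$ of size $\gamma N$ and a red list $R$ of size $(1-\gamma)N$. Let $\delta>0$, $\alpha=\exp(\delta)$, and form the watermarked distribution by boosting the green list logits by $\delta$, i.e. $$\hat p_k=\frac{\alpha^{\mathbf{1}[k\in G]}\,p_k}{\sum_{i\in R}p_i+\alpha\sum_{i\in G}p_i}.$$ Sample a token index $k$ from the watermarked distribution. Then the probability (over the random partition and the sampling) that the token lies in the green list satisfies $$\mathbb{P}[k\in G]\ge \frac{\gamma\alpha}{1+(\alpha-1)\gamma}\,S\!\left(p,\frac{(1-\gamma)(\alpha-1)}{1+(\alpha-1)\gamma}\right).$$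
   Context: Spike entropy: for a discrete probability vector $p=(p_k)$ and a scalar $z$, the spike entropy of $p$ with modulus $z$ is $S(p,z)=\sum_k \frac{p_k}{1+z p_k}$. *)

theory Defs
  imports "HOL-Probability.Probability"
begin

text \<open>Tokens are indexed by {..<N} (i.e. 0..N-1 instead of 1..N).\<close>

definition spike_entropy :: "nat \<Rightarrow> (nat \<Rightarrow> real) \<Rightarrow> real \<Rightarrow> real" where
  "spike_entropy N p z = (\<Sum>k<N. p k / (1 + z * p k))"

definition wm_weight :: "nat \<Rightarrow> (nat \<Rightarrow> real) \<Rightarrow> real \<Rightarrow> nat set \<Rightarrow> nat \<Rightarrow> real" where
  "wm_weight N p \<alpha> G k =
     (if k < N then (if k \<in> G then \<alpha> else 1) * p k /
        ((\<Sum>i\<in>{..<N} - G. p i) + \<alpha> * (\<Sum>i\<in>G. p i))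
      else 0)"

definition watermark_pmf :: "nat \<Rightarrow> (nat \<Rightarrow> real) \<Rightarrow> real \<Rightarrow> nat set \<Rightarrow> nat pmf" where
  "watermark_pmf N p \<alpha> G = embed_pmf (wm_weight N p \<alpha> G)"

text \<open>All possible green lists of size m (the red list is the complement in {..<N}).\<close>
definition green_lists :: "nat \<Rightarrow> nat \<Rightarrow> nat set set" where
  "green_lists N m = {G. G \<subseteq> {..<N} \<and> card G = m}"

definition watermark_experiment :: "nat \<Rightarrow> nat \<Rightarrow> (nat \<Rightarrow> real) \<Rightarrow> real \<Rightarrow> (nat set \<times> nat) pmf" where
  "watermark_experiment N m p \<alpha> =
     pmf_of_set (green_lists N m) \<bind> (\<lambda>G. map_pmf (\<lambda>k. (G, k)) (watermark_pmf N p \<alpha> G))"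

end

theory Submission
  imports Defs
begin

lemma count_supersets:
  assumes "finite S" "T \<subseteq> S" "card T \<le> m"
  shows "card {G. G \<subseteq> S \<and> card G = m \<and> T \<subseteq> G} = (card S - card T) choose (m - card T)"
proof -
  have fT: "finite T" using assms finite_subset by blast
  have "bij_betw (\<lambda>G. G - T) {G. G \<subseteq> S \<and> card G = m \<and> T \<subseteq> G} {H. H \<subseteq> S - T \<and> card H = m - card T}"
  proof (rule bij_betw_byWitness[where f'="\<lambda>H. H \<union> T"])
    show "\<forall>a\<in>{G. G \<subseteq> S \<and> card G = m \<and> T \<subseteq> G}. a - T \<union> T = a" by auto
    show "\<forall>a'\<in>{H. H \<subseteq> S - T \<and> card H = m - card T}. a' \<union> T - T = a'" by auto
    show "(\<lambda>G. G - T) ` {G. G \<subseteq> S \<and> card G = m \<and> T \<subseteq> G} \<subseteq> {H. H \<subseteq> S - T \<and> card H = m - card T}"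
      using fT by (auto simp: card_Diff_subset)
    show "(\<lambda>H. H \<union> T) ` {H. H \<subseteq> S - T \<and> card H = m - card T} \<subseteq> {G. G \<subseteq> S \<and> card G = m \<and> T \<subseteq> G}"
    proof clarify
      fix H assume H: "H \<subseteq> S - T" "card H = m - card T"
      have "finite H" using H assms finite_subset by blast
      then have "card (H \<union> T) = card H + card T" using H fT by (subst card_Un_disjoint) auto
      then show "H \<union> T \<subseteq> S \<and> card (H \<union> T) = m \<and> T \<subseteq> H \<union> T" using H assms by auto
    qed
  qed
  then have "card {G. G \<subseteq> S \<and> card G = m \<and> T \<subseteq> G} = card {H. H \<subseteq> S - T \<and> card H = m - card T}"
    by (rule bij_betw_same_card)
  also have "\<dots> = card (S - T) choose (m - card T)" using assms by (simp add: n_subsets)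
  also have "card (S - T) = card S - card T" using assms fT by (simp add: card_Diff_subset)
  finally show ?thesis .
qed

lemma inv_sum_bound:
  fixes f :: "'a \<Rightarrow> real" and B :: real
  assumes "finite A" "\<And>x. x \<in> A \<Longrightarrow> f x > 0" "B > 0" "(\<Sum>x\<in>A. f x) \<le> card A * B"
  shows "(\<Sum>x\<in>A. 1 / f x) \<ge> card A / B"
proof -
  have each: "1 / f x \<ge> 2 / B - f x / B^2" if "x \<in> A" for x
  proof -
    have fx: "f x > 0" using assms that by auto
    have "0 \<le> (f x - B)^2" by simp
    then have "0 \<le> (f x - B)^2 / (B^2 * f x)" using fx assms by simp
    also have "(f x - B)^2 / (B^2 * f x) = 1 / f x - (2 / B - f x / B^2)"
      using fx assms by (simp add: field_simps power2_eq_square)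
    finally show ?thesis by simp
  qed
  have "(\<Sum>x\<in>A. 1 / f x) \<ge> (\<Sum>x\<in>A. 2 / B - f x / B^2)"
    using each by (rule sum_mono)
  moreover have "(\<Sum>x\<in>A. 2 / B - f x / B^2) = 2 * (real (card A) / B) - (\<Sum>x\<in>A. f x) / B^2"
    by (simp add: sum_subtractf sum_divide_distrib)
  moreover have "(\<Sum>x\<in>A. f x) / B^2 \<le> card A * B / B^2"
    using assms by (simp add: divide_right_mono)
  moreover have "card A * B / B^2 = card A / B" using assms by (simp add: power2_eq_square)
  ultimately show ?thesis by (smt (verit))
qed


lemma wm_denom:
  fixes p :: "nat \<Rightarrow> real" and \<alpha> :: real
  assumes "G \<subseteq> {..<N}" "(\<Sum>k<N. p k) = 1"
  shows "(\<Sum>i\<in>{..<N} - G. p i) + \<alpha> * (\<Sum>i\<in>G. p i) = 1 + (\<alpha> - 1) * (\<Sum>i\<in>G. p i)"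
proof -
  have "(\<Sum>i\<in>{..<N} - G. p i) = (\<Sum>k<N. p k) - (\<Sum>i\<in>G. p i)"
    using assms by (simp add: sum_diff)
  then show ?thesis using assms by (simp add: algebra_simps)
qed

lemma wm_denom_pos:
  fixes p :: "nat \<Rightarrow> real"
  assumes "G \<subseteq> {..<N}" "\<And>k. k < N \<Longrightarrow> 0 < p k \<and> p k < 1" "(\<Sum>k<N. p k) = 1" "\<alpha> > 1"
  shows "1 + (\<alpha> - 1) * (\<Sum>i\<in>G. p i) > 0"
proof -
  have "(\<Sum>i\<in>G. p i) \<ge> 0" using assms by (intro sum_nonneg) (auto intro: less_imp_le)
  then show ?thesis using assms by (simp add: add_pos_nonneg)
qed

lemma pmf_watermark:
  fixes p :: "nat \<Rightarrow> real"
  assumes G: "G \<subseteq> {..<N}" and p: "\<And>k. k < N \<Longrightarrow> 0 < p k \<and> p k < 1" and ps: "(\<Sum>k<N. p k) = 1"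
    and a: "\<alpha> > 1"
  shows "pmf (watermark_pmf N p \<alpha> G) k = wm_weight N p \<alpha> G k"
proof -
  define D where "D = 1 + (\<alpha> - 1) * (\<Sum>i\<in>G. p i)"
  have D: "D > 0" unfolding D_def using wm_denom_pos[OF G p ps a] by simp
  have w: "wm_weight N p \<alpha> G j = (if j < N then (if j \<in> G then \<alpha> else 1) * p j / D else 0)" for j
    unfolding wm_weight_def D_def using wm_denom[OF G ps] by simp
  have nn: "0 \<le> wm_weight N p \<alpha> G j" for j
    unfolding w using D a p by (auto intro!: divide_nonneg_pos mult_nonneg_nonneg less_imp_le)
  have "(\<Sum>j<N. (if j \<in> G then \<alpha> else 1) * p j) = (\<Sum>j\<in>{..<N} - G. (if j \<in> G then \<alpha> else 1) * p j) + (\<Sum>j\<in>G. (if j \<in> G then \<alpha> else 1) * p j)"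
    using G by (intro sum.subset_diff) auto
  also have "\<dots> = (\<Sum>i\<in>{..<N} - G. p i) + \<alpha> * (\<Sum>i\<in>G. p i)"
    by (simp add: sum_distrib_left)
  also have "\<dots> = D" unfolding D_def by (rule wm_denom[OF G ps])
  finally have num: "(\<Sum>j<N. (if j \<in> G then \<alpha> else 1) * p j) = D" .
  have s1: "(\<Sum>j<N. wm_weight N p \<alpha> G j) = 1"
    unfolding w using D num by (simp add: sum_divide_distrib[symmetric])
  have "(\<integral>\<^sup>+ x. ennreal (wm_weight N p \<alpha> G x) \<partial>count_space UNIV) = (\<Sum>j<N. ennreal (wm_weight N p \<alpha> G j))"
    by (subst nn_integral_count_space'[of "{..<N}"]) (auto simp: w)
  also have "\<dots> = ennreal (\<Sum>j<N. wm_weight N p \<alpha> G j)"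
    using nn by (simp add: sum_ennreal)
  also have "\<dots> = 1" using s1 by simp
  finally have "(\<integral>\<^sup>+ x. ennreal (wm_weight N p \<alpha> G x) \<partial>count_space UNIV) = 1" .
  then show ?thesis unfolding watermark_pmf_def using nn by (subst pmf_embed_pmf) auto
qed


lemma final_alg:
  fixes a q g c b d :: real
  assumes "d > 0" "b > 0" "c > 0"
  shows "a * q * (g * c) / b / c = g * a / d * (q / (b / d))"
  using assms by (simp add: field_simps)

theorem lemmaE1:
  fixes N m :: nat and p :: "nat \<Rightarrow> real" and \<gamma> \<delta> \<alpha> :: real
  assumes p_range: "\<And>k. k < N \<Longrightarrow> 0 < p k \<and> p k < 1"
    and p_sum: "(\<Sum>k<N. p k) = 1"
    and gamma: "0 < \<gamma>" "\<gamma> < 1"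
    and m_def: "real m = \<gamma> * real N"
    and delta: "\<delta> > 0"
    and alpha: "\<alpha> = exp \<delta>"
  shows "measure_pmf.prob (watermark_experiment N m p \<alpha>) {(G, k). k \<in> G}
           \<ge> \<gamma> * \<alpha> / (1 + (\<alpha> - 1) * \<gamma>) *
             spike_entropy N p ((1 - \<gamma>) * (\<alpha> - 1) / (1 + (\<alpha> - 1) * \<gamma>))"
proof -
  have N0: "N > 0" using p_sum by (cases N) auto
  have a1: "\<alpha> > 1" using alpha delta by simp
  have gam: "\<gamma> = real m / real N" using m_def N0 by (simp add: field_simps)
  have m1: "m \<ge> 1" using m_def gamma N0
    by (metis less_one linorder_not_le mult_pos_pos of_nat_0 of_nat_0_less_iff less_irrefl)
  have "real m < real N" using m_def gamma N0 by simp
  then have mN: "m < N" by simp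
  define GL where "GL = green_lists N m"
  have GL_eq: "GL = {G. G \<subseteq> {..<N} \<and> card G = m}" unfolding GL_def green_lists_def by simp
  have fin_GL: "finite GL" unfolding GL_eq by (rule finite_subset[of _ "Pow {..<N}"]) auto
  have card_GL: "card GL = N choose m" unfolding GL_eq using n_subsets[of "{..<N}" m] by simp
  have GL_ne: "GL \<noteq> {}" using card_GL mN by (metis card.empty less_imp_le zero_less_binomial less_numeral_extra(3))
  define P where "P G = (\<Sum>i\<in>G. p i)" for G
  define D where "D G = 1 + (\<alpha> - 1) * P G" for G
  have Dpos: "D G > 0" if "G \<in> GL" for G
    unfolding D_def P_def using wm_denom_pos[OF _ p_range p_sum a1] that GL_eq by auto
  define W where "W G = watermark_pmf N p \<alpha> G" for G
  have wpmf: "pmf (W G) k = \<alpha> * p k / D G" if "G \<in> GL" "k \<in> G" for G k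
  proof -
    have "k < N" using that GL_eq by auto
    have "pmf (W G) k = wm_weight N p \<alpha> G k" unfolding W_def
      using that GL_eq by (intro pmf_watermark[OF _ p_range p_sum a1]) auto
    then show ?thesis unfolding wm_weight_def D_def P_def using that \<open>k < N\<close> wm_denom[OF _ p_sum] GL_eq by auto
  qed
  have wpmf0: "pmf (W G) k = 0" if "G \<in> GL" "\<not> k < N" for G k
  proof -
    have "pmf (W G) k = wm_weight N p \<alpha> G k" unfolding W_def
      using that GL_eq by (intro pmf_watermark[OF _ p_range p_sum a1]) auto
    then show ?thesis unfolding wm_weight_def using that by simp
  qed
  have setW: "set_pmf (W G) \<subseteq> {..<N}" if "G \<in> GL" for G
    using wpmf0[OF that] by (auto simp: set_pmf_eq)
  define E where "E = {(G, k). k \<in> (G::nat set)}"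
  have exp_eq: "watermark_experiment N m p \<alpha> = pmf_of_set GL \<bind> (\<lambda>G. map_pmf (\<lambda>k. (G, k)) (W G))"
    unfolding watermark_experiment_def GL_def W_def by simp
  have "measure_pmf.prob (watermark_experiment N m p \<alpha>) E
      = measure_pmf.expectation (watermark_experiment N m p \<alpha>) (indicator E :: _ \<Rightarrow> real)"
    by simp
  also have "\<dots> = (\<Sum>G\<in>GL. measure_pmf.expectation (map_pmf (\<lambda>k. (G, k)) (W G)) (indicator E :: _ \<Rightarrow> real) /\<^sub>R real (card GL))"
    unfolding exp_eq using GL_ne fin_GL setW
    by (intro pmf_expectation_bind_pmf_of_set) (auto intro!: finite_imageI intro: finite_subset[OF setW finite_lessThan])
  also have "\<dots> = (\<Sum>G\<in>GL. (\<Sum>k\<in>G. \<alpha> * p k / D G)) / real (card GL)"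
  proof -
    have "measure_pmf.expectation (map_pmf (\<lambda>k. (G, k)) (W G)) (indicator E :: _ \<Rightarrow> real) = (\<Sum>k\<in>G. \<alpha> * p k / D G)"
      if G: "G \<in> GL" for G
    proof -
      have fG: "finite G" using G GL_eq by (auto intro: finite_subset)
      have "measure_pmf.expectation (map_pmf (\<lambda>k. (G, k)) (W G)) (indicator E :: _ \<Rightarrow> real)
          = measure_pmf.prob (map_pmf (\<lambda>k. (G, k)) (W G)) E" by simp
      also have "\<dots> = measure_pmf.prob (W G) G" unfolding measure_map_pmf E_def
        by (rule arg_cong[where f="measure_pmf.prob (W G)"]) auto
      also have "\<dots> = (\<Sum>k\<in>G. pmf (W G) k)" using fG by (rule measure_measure_pmf_finite)
      also have "\<dots> = (\<Sum>k\<in>G. \<alpha> * p k / D G)"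
        using G GL_eq by (intro sum.cong) (auto simp: wpmf)
      finally show ?thesis .
    qed
    note h = this
    show ?thesis unfolding sum_divide_distrib using h by (intro sum.cong refl) (simp add: sum_distrib_left field_simps)
  qed
  finally have LHS: "measure_pmf.prob (watermark_experiment N m p \<alpha>) E = (\<Sum>G\<in>GL. (\<Sum>k\<in>G. \<alpha> * p k / D G)) / real (card GL)" .
  define A where "A k = {G \<in> GL. k \<in> G}" for k
  have swap: "(\<Sum>G\<in>GL. (\<Sum>k\<in>G. \<alpha> * p k / D G)) = (\<Sum>k<N. (\<Sum>G\<in>A k. \<alpha> * p k / D G))"
  proof -
    have "(\<Sum>G\<in>GL. (\<Sum>k\<in>G. \<alpha> * p k / D G)) = (\<Sum>G\<in>GL. (\<Sum>k<N. if k \<in> G then \<alpha> * p k / D G else 0))"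
    proof (rule sum.cong[OF refl])
      fix G assume "G \<in> GL"
      then have "{k \<in> {..<N}. k \<in> G} = G" using GL_eq by auto
      then show "(\<Sum>k\<in>G. \<alpha> * p k / D G) = (\<Sum>k<N. if k \<in> G then \<alpha> * p k / D G else 0)"
        using sum.inter_filter[of "{..<N}" "\<lambda>k. \<alpha> * p k / D G" "\<lambda>k. k \<in> G"] by simp
    qed
    also have "\<dots> = (\<Sum>k<N. (\<Sum>G\<in>GL. if k \<in> G then \<alpha> * p k / D G else 0))" by (rule sum.swap)
    also have "\<dots> = (\<Sum>k<N. (\<Sum>G\<in>A k. \<alpha> * p k / D G))"
      unfolding A_def using fin_GL by (intro sum.cong[OF refl]) (simp add: sum.inter_filter)
    finally show ?thesis .
  qed
  define B where "B k = 1 + (\<alpha> - 1) * (p k + \<gamma> * (1 - p k))" for k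
  have Bpos: "B k > 0" if "k < N" for k
  proof -
    have "p k + \<gamma> * (1 - p k) \<ge> 0" using p_range[OF that] gamma by (simp add: add_nonneg_nonneg)
    then show ?thesis unfolding B_def using a1 by (simp add: add_pos_nonneg)
  qed
  have perk: "(\<Sum>G\<in>A k. \<alpha> * p k / D G) \<ge> \<alpha> * p k * (\<gamma> * real (card GL)) / B k" if k: "k < N" for k
  proof -
    have finA: "finite (A k)" unfolding A_def using fin_GL by simp
    have A_eq: "A k = {G. G \<subseteq> {..<N} \<and> card G = m \<and> {k} \<subseteq> G}" unfolding A_def GL_eq by auto
    have cardA: "card (A k) = (N - 1) choose (m - 1)"
      unfolding A_eq using k m1 by (subst count_supersets) auto
    have "m * (N choose m) = N * ((N - 1) choose (m - 1))" using m1 by (intro times_binomial_minus1_eq) simp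
    then have "real m * real (card GL) = real N * real (card (A k))"
      unfolding card_GL cardA by (metis of_nat_mult)
    then have cA: "real (card (A k)) = \<gamma> * real (card GL)" unfolding gam using N0 by (simp add: field_simps)
    define c where "c = real (card (A k))"
    have dle: "real (card {G \<in> A k. i \<in> G}) \<le> \<gamma> * c" if i: "i < N" "i \<noteq> k" for i
    proof (cases "m \<ge> 2")
      case True
      have eq: "{G \<in> A k. i \<in> G} = {G. G \<subseteq> {..<N} \<and> card G = m \<and> {k, i} \<subseteq> G}" unfolding A_eq by auto
      have cd: "card {G \<in> A k. i \<in> G} = (N - 2) choose (m - 2)"
        unfolding eq using k i True mN by (subst count_supersets) (auto simp: numeral_2_eq_2)
      have "(m - 1) * ((N - 1) choose (m - 1)) = (N - 1) * ((N - 1 - 1) choose (m - 1 - 1))"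
        using True by (intro times_binomial_minus1_eq) simp
      then have "real (m - 1) * c = real (N - 1) * real (card {G \<in> A k. i \<in> G})"
        unfolding c_def cardA cd by (metis diff_diff_left nat_1_add_1 of_nat_mult)
      then have e: "(real m - 1) * c = (real N - 1) * real (card {G \<in> A k. i \<in> G})"
        using True mN by (simp add: of_nat_diff)
      have c0: "c \<ge> 0" unfolding c_def by simp
      have "(real N - 1) * (real N * real (card {G \<in> A k. i \<in> G})) = real N * ((real m - 1) * c)"
        using e by (metis mult.left_commute)
      also have "\<dots> \<le> (real N - 1) * (real m * c)"
      proof -
        have "real N * (real m - 1) \<le> (real N - 1) * real m" using mN by (simp add: algebra_simps)
        then show ?thesis using c0 by (metis mult.assoc mult_right_mono)
      qed
      finally have "real N * real (card {G \<in> A k. i \<in> G}) \<le> real m * c"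
        using True mN by (simp add: mult_le_cancel_left_pos)
      then show ?thesis unfolding gam using N0 by (simp add: field_simps)
    next
      case False
      then have m1': "m = 1" using m1 by simp
      have "{G \<in> A k. i \<in> G} = {}"
      proof (rule ccontr)
        assume "{G \<in> A k. i \<in> G} \<noteq> {}"
        then obtain G where G: "G \<in> A k" "i \<in> G" by auto
        then have "k \<in> G" "G \<subseteq> {..<N}" "card G = 1" unfolding A_eq using m1' by auto
        then have "card {k, i} \<le> card G" using G by (intro card_mono) (auto intro: finite_subset)
        then show False using i \<open>card G = 1\<close> by simp
      qed
      then show ?thesis unfolding c_def using gamma by (simp only: card.empty) simp
    qed
    have PG: "P G = p k + (\<Sum>i\<in>{..<N} - {k}. if i \<in> G then p i else 0)" if G: "G \<in> A k" for G
    proof -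
      have GG: "G \<subseteq> {..<N}" "k \<in> G" using G A_eq by auto
      have fG: "finite G" using GG finite_subset by blast
      have "P G = p k + (\<Sum>i\<in>G - {k}. p i)" unfolding P_def using fG GG by (simp add: sum.remove)
      moreover have "{i \<in> {..<N} - {k}. i \<in> G} = G - {k}" using GG by auto
      ultimately show ?thesis
        using sum.inter_filter[of "{..<N} - {k}" p "\<lambda>i. i \<in> G"] by simp
    qed
    have "(\<Sum>G\<in>A k. P G) = (\<Sum>G\<in>A k. p k + (\<Sum>i\<in>{..<N} - {k}. if i \<in> G then p i else 0))"
      using PG by (rule sum.cong[OF refl])
    also have "\<dots> = c * p k + (\<Sum>i\<in>{..<N} - {k}. (\<Sum>G\<in>A k. if i \<in> G then p i else 0))"
      unfolding c_def by (simp add: sum.distrib sum.swap[of _ "A k"])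
    also have "\<dots> = c * p k + (\<Sum>i\<in>{..<N} - {k}. p i * real (card {G \<in> A k. i \<in> G}))"
      using finA by (simp add: sum.inter_filter[symmetric] mult.commute)
    also have "\<dots> \<le> c * p k + (\<Sum>i\<in>{..<N} - {k}. p i * (\<gamma> * c))"
      using dle p_range by (intro add_left_mono sum_mono mult_left_mono) (auto intro: less_imp_le)
    also have "(\<Sum>i\<in>{..<N} - {k}. p i * (\<gamma> * c)) = (\<gamma> * c) * (1 - p k)"
      using k p_sum by (simp add: sum_distrib_right[symmetric] sum_diff1 mult.commute)
    finally have sumP: "(\<Sum>G\<in>A k. P G) \<le> c * (p k + \<gamma> * (1 - p k))" by (simp add: algebra_simps)
    have "(\<Sum>G\<in>A k. D G) = c + (\<alpha> - 1) * (\<Sum>G\<in>A k. P G)"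
      unfolding D_def c_def by (simp add: sum.distrib sum_distrib_left)
    also have "\<dots> \<le> c + (\<alpha> - 1) * (c * (p k + \<gamma> * (1 - p k)))"
      using sumP a1 by (intro add_left_mono mult_left_mono) auto
    also have "\<dots> = c * B k" unfolding B_def by (simp add: algebra_simps)
    finally have sumD: "(\<Sum>G\<in>A k. D G) \<le> real (card (A k)) * B k" unfolding c_def .
    have inv: "(\<Sum>G\<in>A k. 1 / D G) \<ge> real (card (A k)) / B k"
      using finA Dpos Bpos[OF k] sumD unfolding A_def by (intro inv_sum_bound) auto
    have apos: "\<alpha> * p k \<ge> 0" using a1 p_range[OF k] by simp
    have "(\<Sum>G\<in>A k. \<alpha> * p k / D G) = \<alpha> * p k * (\<Sum>G\<in>A k. 1 / D G)"
      by (simp add: sum_distrib_left)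
    also have "\<dots> \<ge> \<alpha> * p k * (real (card (A k)) / B k)" using inv apos by (rule mult_left_mono)
    finally show ?thesis using cA by simp
  qed
  have cGL: "real (card GL) > 0" using fin_GL GL_ne by (simp add: card_gt_0_iff)
  have den: "1 + (\<alpha> - 1) * \<gamma> > 0" using a1 gamma by (simp add: add_pos_nonneg)
  have "(\<Sum>k<N. \<alpha> * p k * (\<gamma> * real (card GL)) / B k) \<le> (\<Sum>k<N. (\<Sum>G\<in>A k. \<alpha> * p k / D G))"
    using perk by (intro sum_mono) auto
  then have "(\<Sum>k<N. \<alpha> * p k * (\<gamma> * real (card GL)) / B k) / real (card GL)
      \<le> measure_pmf.prob (watermark_experiment N m p \<alpha>) E"
    unfolding LHS swap using cGL by (simp add: divide_right_mono)
  moreover have "(\<Sum>k<N. \<alpha> * p k * (\<gamma> * real (card GL)) / B k) / real (card GL)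
      = \<gamma> * \<alpha> / (1 + (\<alpha> - 1) * \<gamma>) *
             spike_entropy N p ((1 - \<gamma>) * (\<alpha> - 1) / (1 + (\<alpha> - 1) * \<gamma>))"
    unfolding spike_entropy_def sum_divide_distrib sum_distrib_left
  proof (rule sum.cong[OF refl])
    fix k assume "k \<in> {..<N}"
    then have k: "k < N" by simp
    have Bk: "B k > 0" using Bpos[OF k] .
    have Beq: "B k = ((1 + (\<alpha> - 1) * \<gamma>) + (1 - \<gamma>) * (\<alpha> - 1) * p k)" unfolding B_def by (simp add: algebra_simps)
    have "1 + (1 - \<gamma>) * (\<alpha> - 1) / (1 + (\<alpha> - 1) * \<gamma>) * p k = B k / (1 + (\<alpha> - 1) * \<gamma>)"
      unfolding Beq using den by (simp add: field_simps)
    note e1 = this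
    show "\<alpha> * p k * (\<gamma> * real (card GL)) / B k / real (card GL) =
         \<gamma> * \<alpha> / (1 + (\<alpha> - 1) * \<gamma>) * (p k / (1 + (1 - \<gamma>) * (\<alpha> - 1) / (1 + (\<alpha> - 1) * \<gamma>) * p k))"
      unfolding e1 using den Bk cGL by (rule final_alg)
  qed
  ultimately show ?thesis unfolding E_def by simp
qed

end
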